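(* Let $n$ be a positive integer and $G=(V,E)$ the complete graph on $n$ vertices. Let $\tau$ be a set of types, $f:\tau\to\mathbb{Q}_{\ge1}$ a fitness function, and $\alpha\in\tau$. Let $\beta^+=\arg\max\{f(\beta):\beta\in\tau\setminus\{\alpha\}\}$ and $\beta^-=\arg\min\{f(\beta):\beta\in\tau\setminus\{\alpha\}\}$, and suppose $f(\alpha)\ne f(\beta^+)$ and $f(\alpha)\ne f(\beta^-)$. Let $M_0:V\to\tau$ be a state and let $i$ be the number of vertices mapped to $\alpha$ by $M_0$. Then $$\frac{1-\left(f(\beta^+)/f(\alpha)\right)^i}{1-\left(f(\beta^+)/f(\alpha)\right)^n}\le\pi_\alpha(G,\tau,f,M_0)\le\frac{1-\left(f(\beta^-)/f(\alpha)\right)^i}{1-\left(f(\beta^-)/f(\alpha)\right)^n}.$$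
   Context: For $G=(V,E)$, $N(v)$ is the neighbourhood of $v$. For a state $S:V\to\tau$ and $v,w\in V$, $S|_{v\to w}$ equals $S$ except $w$ gets type $S(v)$. The Moran process $M(G,\tau,f,M_0)$ is the Markov chain on states started at $M_0$ in which, given $M_t$, a vertex $v$ is chosen with probability $f(M_t(v))/\sum_{u\in V}f(M_t(u))$, then $w\in N(v)$ uniformly at random, and $M_{t+1}=M_t|_{v\to w}$. $\pi_j(G,\tau,f,M_0)$ is the probability that at some time every vertex has type $j$. *)

theory Defs
  imports Complex_Main
begin

text \<open>A graph is given by its vertex set V and neighbourhood function N.
  States are functions S from vertices to types; only values on V matter.
  S|_{v->w} is S(w := S v).\<close>

definition all_type :: "'v set \<Rightarrow> ('v \<Rightarrow> 't) \<Rightarrow> 't \<Rightarrow> bool" where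
  "all_type V S j \<longleftrightarrow> (\<forall>v\<in>V. S v = j)"

text \<open>hit_within V N f j t S is the probability that the Moran process started
  in state S has, at some time in 0..t, every vertex of type j.
  (If N v is empty, choosing v leaves the state unchanged; this only matters
  for the one-vertex graph.)\<close>

fun hit_within :: "'v set \<Rightarrow> ('v \<Rightarrow> 'v set) \<Rightarrow> ('t \<Rightarrow> real) \<Rightarrow> 't \<Rightarrow> nat \<Rightarrow> ('v \<Rightarrow> 't) \<Rightarrow> real" where
  "hit_within V N f j 0 S = (if all_type V S j then 1 else 0)"
| "hit_within V N f j (Suc t) S =
     (if all_type V S j then 1
      else (\<Sum>v\<in>V. f (S v) / (\<Sum>u\<in>V. f (S u)) *
              (if N v = {} then hit_within V N f j t S
               else (\<Sum>w\<in>N v. hit_within V N f j t (S(w := S v))) / real (card (N v)))))"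

definition fixation_prob :: "'v set \<Rightarrow> ('v \<Rightarrow> 'v set) \<Rightarrow> ('t \<Rightarrow> real) \<Rightarrow> ('v \<Rightarrow> 't) \<Rightarrow> 't \<Rightarrow> real" where
  "fixation_prob V N f M0 j = (SUP t. hit_within V N f j t M0)"

definition complete_nbhd :: "nat \<Rightarrow> nat \<Rightarrow> nat set" where
  "complete_nbhd n v = {..<n} - {v}"

end

theory Submission
  imports Defs
begin


locale mor =
  fixes n :: nat and T :: "'t set" and F :: "'t \<Rightarrow> real" and \<alpha> :: 't
  assumes n2: "2 \<le> n" and Fge: "\<forall>x\<in>T. 1 \<le> F x" and aT: "\<alpha> \<in> T"
begin

definition valid where "valid S \<longleftrightarrow> (\<forall>v<n. S v \<in> T)"
definition Aset where "Aset S = {v\<in>{..<n}. S v = \<alpha>}"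
definition X where "X S = card (Aset S)"
definition W where "W S = (\<Sum>u<n. F (S u))"
definition B where "B S = (\<Sum>u\<in>{..<n} - Aset S. F (S u))"
definition H where "H t S = hit_within {..<n} (complete_nbhd n) F \<alpha> t S"
definition step where
  "step h S = (\<Sum>v<n. F (S v) / W S * ((\<Sum>w\<in>{..<n}-{v}. h (S(w:=S v))) / real (n-1)))"

lemma W_pos: "valid S \<Longrightarrow> W S > 0"
proof -
  assume "valid S"
  hence "\<forall>u\<in>{..<n}. F (S u) > 0" using Fge unfolding valid_def
    by (metis lessThan_iff less_le_trans zero_less_one)
  moreover have "{..<n} \<noteq> {}" using n2 by (simp add: lessThan_empty_iff)
  ultimately show ?thesis unfolding W_def by (intro sum_pos) auto
qed

lemma Aset_sub: "Aset S \<subseteq> {..<n}" unfolding Aset_def by auto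

lemma X_le: "X S \<le> n"
  unfolding X_def using card_mono[OF _ Aset_sub] by fastforce

lemma all_type_iff: "all_type {..<n} S \<alpha> \<longleftrightarrow> X S = n"
proof
  assume "all_type {..<n} S \<alpha>"
  hence "Aset S = {..<n}" unfolding all_type_def Aset_def by auto
  thus "X S = n" unfolding X_def by simp
next
  assume "X S = n"
  hence "Aset S = {..<n}" unfolding X_def using Aset_sub
    by (metis card_lessThan card_subset_eq finite_lessThan)
  thus "all_type {..<n} S \<alpha>" unfolding all_type_def Aset_def by auto
qed

lemma H_all: "all_type {..<n} S \<alpha> \<Longrightarrow> H t S = 1"
  unfolding H_def by (cases t) auto

lemma H_Suc: "\<not> all_type {..<n} S \<alpha> \<Longrightarrow> H (Suc t) S = step (H t) S"
proof -
  assume na: "\<not> all_type {..<n} S \<alpha>"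
  have ne: "\<And>v. v < n \<Longrightarrow> complete_nbhd n v \<noteq> {}"
    unfolding complete_nbhd_def using n2
  proof -
    fix v assume "v < n"
    have "(if v = 0 then 1 else 0) \<in> {..<n} - {v}" using n2 by auto
    thus "{..<n} - {v} \<noteq> {}" by blast
  qed
  have cd: "\<And>v. v < n \<Longrightarrow> card (complete_nbhd n v) = n - 1"
    unfolding complete_nbhd_def by simp
  show ?thesis unfolding H_def hit_within.simps(2) if_not_P[OF na] step_def W_def
  proof (rule sum.cong[OF refl])
    fix v assume "v \<in> {..<n}"
    hence v: "v < n" by simp
    show "F (S v) / (\<Sum>u<n. F (S u)) *
      (if complete_nbhd n v = {} then hit_within {..<n} (complete_nbhd n) F \<alpha> t S
       else (\<Sum>w\<in>complete_nbhd n v. hit_within {..<n} (complete_nbhd n) F \<alpha> t (S(w := S v))) / real (card (complete_nbhd n v))) =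
      F (S v) / (\<Sum>u<n. F (S u)) * ((\<Sum>w\<in>{..<n} - {v}. hit_within {..<n} (complete_nbhd n) F \<alpha> t (S(w := S v))) / real (n - 1))"
      unfolding if_not_P[OF ne[OF v]] cd[OF v] by (simp add: complete_nbhd_def)
  qed
qed

lemma valid_upd: "valid S \<Longrightarrow> v < n \<Longrightarrow> valid (S(w:=S v))"
  unfolding valid_def by auto

lemma Aset_upd: "w < n \<Longrightarrow> Aset (S(w:=c)) = (if c = \<alpha> then insert w (Aset S) else Aset S - {w})"
  unfolding Aset_def by auto

lemma X_upd: "w < n \<Longrightarrow> X (S(w:=c)) =
   (if c = \<alpha> \<and> S w \<noteq> \<alpha> then X S + 1 else if c \<noteq> \<alpha> \<and> S w = \<alpha> then X S - 1 else X S)"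
proof -
  assume w: "w < n"
  have fin: "finite (Aset S)" using Aset_sub finite_subset by blast
  have iff: "w \<in> Aset S \<longleftrightarrow> S w = \<alpha>" using w unfolding Aset_def by auto
  show ?thesis unfolding X_def Aset_upd[OF w] using fin iff
    by (auto simp: card_insert_if card_Diff_singleton_if insert_absorb)
qed

lemma wsum: "valid S \<Longrightarrow> (\<Sum>v<n. F (S v) / W S) = 1"
  using W_pos[of S] unfolding W_def by (simp add: sum_divide_distrib[symmetric])

lemma step_sub: "valid S \<Longrightarrow> step (\<lambda>S'. h S' - c) S = step h S - c"
proof -
  assume vS: "valid S"
  have n1: "real (n-1) > 0" using n2 by simp
  have inner: "\<And>v. v < n \<Longrightarrow> (\<Sum>w\<in>{..<n}-{v}. h (S(w:=S v)) - c) / real (n-1)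
     = (\<Sum>w\<in>{..<n}-{v}. h (S(w:=S v))) / real (n-1) - c"
    using n1 by (simp add: sum_subtractf field_simps)
  have "step (\<lambda>S'. h S' - c) S = (\<Sum>v<n. F (S v) / W S * ((\<Sum>w\<in>{..<n}-{v}. h (S(w:=S v))) / real (n-1)) - F (S v) / W S * c)"
    unfolding step_def
  proof (intro sum.cong refl)
    fix v assume "v \<in> {..<n}"
    hence "v < n" by simp
    show "F (S v) / W S * ((\<Sum>w\<in>{..<n}-{v}. h (S(w:=S v)) - c) / real (n-1)) =
      F (S v) / W S * ((\<Sum>w\<in>{..<n}-{v}. h (S(w:=S v))) / real (n-1)) - F (S v) / W S * c"
      unfolding inner[OF \<open>v < n\<close>] by (simp add: right_diff_distrib)
  qed
  also have "\<dots> = step h S - (\<Sum>v<n. F (S v) / W S) * c"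
    unfolding step_def by (simp add: sum_subtractf sum_distrib_right)
  finally show ?thesis using wsum[OF vS] by simp
qed

lemma step_mono: "valid S \<Longrightarrow> (\<And>S'. valid S' \<Longrightarrow> h1 S' \<le> h2 S') \<Longrightarrow> step h1 S \<le> step h2 S"
proof -
  assume vS: "valid S" and le: "\<And>S'. valid S' \<Longrightarrow> h1 S' \<le> h2 S'"
  have Wp: "W S > 0" using W_pos[OF vS] .
  show ?thesis unfolding step_def
  proof (intro sum_mono)
    fix v assume v: "v \<in> {..<n}"
    have "(\<Sum>w\<in>{..<n}-{v}. h1 (S(w:=S v))) \<le> (\<Sum>w\<in>{..<n}-{v}. h2 (S(w:=S v)))"
      using v by (intro sum_mono le valid_upd[OF vS]) auto
    hence a: "(\<Sum>w\<in>{..<n}-{v}. h1 (S(w:=S v))) / real (n-1) \<le> (\<Sum>w\<in>{..<n}-{v}. h2 (S(w:=S v))) / real (n-1)"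
      by (simp add: divide_right_mono)
    have "0 \<le> F (S v) / W S" using v vS Fge Wp unfolding valid_def
      by (metis divide_nonneg_pos lessThan_iff order.trans zero_le_one less_imp_le)
    thus "F (S v) / W S * ((\<Sum>w\<in>{..<n}-{v}. h1 (S(w:=S v))) / real (n-1)) \<le> F (S v) / W S * ((\<Sum>w\<in>{..<n}-{v}. h2 (S(w:=S v))) / real (n-1))"
      by (rule mult_left_mono[OF a])
  qed
qed

lemma H_nonneg: "valid S \<Longrightarrow> 0 \<le> H t S"
proof (induction t arbitrary: S)
  case 0 thus ?case unfolding H_def by simp
next
  case (Suc t)
  show ?case
  proof (cases "all_type {..<n} S \<alpha>")
    case True thus ?thesis using H_all by simp
  next
    case False
    have "step (\<lambda>_. 0) S \<le> step (H t) S" using Suc by (intro step_mono) auto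
    moreover have "step (\<lambda>_. 0) S = 0" unfolding step_def by simp
    ultimately show ?thesis using H_Suc[OF False] by simp
  qed
qed

end



lemma sum_if_const: "finite V \<Longrightarrow> (\<Sum>w\<in>V. if P w then (c::real) else 0) = real (card {w\<in>V. P w}) * c"
  by (simp add: sum.If_cases Int_def)

lemma sum_if_split: "finite V \<Longrightarrow> (\<Sum>w\<in>V. if P w then (g w::real) else h w) = (\<Sum>w\<in>{w\<in>V. P w}. g w) + (\<Sum>w\<in>{w\<in>V. \<not> P w}. h w)"
  by (simp add: sum.If_cases Int_def set_diff_eq)

context mor begin

lemma card_nonA: "card ({..<n} - Aset S) = n - X S"
  unfolding X_def using Aset_sub[of S] by (metis card_Diff_subset card_lessThan finite_subset finite_lessThan)

lemma drift:
  fixes \<phi> :: "nat \<Rightarrow> real"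
  assumes vS: "valid S"
  shows "step (\<lambda>S'. \<phi> (X S')) S = \<phi> (X S) + real (X S) / (W S * real (n-1)) *
     (F \<alpha> * real (n - X S) * (\<phi> (X S + 1) - \<phi> (X S)) + B S * (\<phi> (X S - 1) - \<phi> (X S)))"
proof -
  define x where "x = X S"
  define Dp where "Dp = \<phi> (x+1) - \<phi> x"
  define Dm where "Dm = \<phi> (x-1) - \<phi> x"
  define e where "e v = (if S v = \<alpha> then real (n - x) * Dp else real x * Dm)" for v
  have n1: "real (n-1) > 0" using n2 by simp
  have Wp: "W S > 0" using W_pos[OF vS] .
  have inner: "(\<Sum>w\<in>{..<n}-{v}. \<phi> (X (S(w:=S v)))) = real (n-1) * \<phi> x + e v" if v: "v < n" for v
  proof -
    define d where "d w = (if S v = \<alpha> then (if S w \<noteq> \<alpha> then Dp else 0) else (if S w = \<alpha> then Dm else 0))" for w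
    have "(\<Sum>w\<in>{..<n}-{v}. \<phi> (X (S(w:=S v)))) = (\<Sum>w\<in>{..<n}-{v}. \<phi> x + d w)"
    proof (rule sum.cong[OF refl])
      fix w assume "w \<in> {..<n}-{v}"
      hence w: "w < n" by simp
      show "\<phi> (X (S(w:=S v))) = \<phi> x + d w"
        unfolding X_upd[OF w] d_def Dp_def Dm_def x_def by auto
    qed
    also have "\<dots> = real (n-1) * \<phi> x + (\<Sum>w\<in>{..<n}-{v}. d w)"
      using v by (simp add: sum.distrib)
    also have "(\<Sum>w\<in>{..<n}-{v}. d w) = (\<Sum>w\<in>{..<n}. d w)"
      using sum.remove[of "{..<n}" v d] v by (simp add: d_def)
    also have "\<dots> = e v"
    proof (cases "S v = \<alpha>")
      case True
      have "(\<Sum>w\<in>{..<n}. d w) = (\<Sum>w\<in>{..<n}. if S w \<noteq> \<alpha> then Dp else 0)"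
        unfolding d_def using True by simp
      also have "\<dots> = real (card {w\<in>{..<n}. S w \<noteq> \<alpha>}) * Dp" by (rule sum_if_const) simp
      also have "{w\<in>{..<n}. S w \<noteq> \<alpha>} = {..<n} - Aset S" unfolding Aset_def by auto
      finally show ?thesis unfolding e_def card_nonA x_def using True by simp
    next
      case False
      have "(\<Sum>w\<in>{..<n}. d w) = (\<Sum>w\<in>{..<n}. if S w = \<alpha> then Dm else 0)"
        unfolding d_def using False by simp
      also have "\<dots> = real (card {w\<in>{..<n}. S w = \<alpha>}) * Dm" by (rule sum_if_const) simp
      finally show ?thesis unfolding e_def x_def X_def Aset_def using False by simp
    qed
    finally show ?thesis .
  qed
  have "step (\<lambda>S'. \<phi> (X S')) S = (\<Sum>v<n. F (S v) / W S * \<phi> x + F (S v) * e v / (W S * real (n-1)))"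
    unfolding step_def
  proof (rule sum.cong[OF refl])
    fix v assume "v \<in> {..<n}"
    hence v: "v < n" by simp
    show "F (S v) / W S * ((\<Sum>w\<in>{..<n}-{v}. \<phi> (X (S(w:=S v)))) / real (n-1)) =
      F (S v) / W S * \<phi> x + F (S v) * e v / (W S * real (n-1))"
      unfolding inner[OF v] using n1 Wp by (simp add: field_simps)
  qed
  also have "\<dots> = (\<Sum>v<n. F (S v) / W S) * \<phi> x + (\<Sum>v<n. F (S v) * e v) / (W S * real (n-1))"
    by (simp add: sum.distrib sum_distrib_right sum_divide_distrib)
  also have "(\<Sum>v<n. F (S v) * e v) = (\<Sum>v\<in>Aset S. F \<alpha> * (real (n - x) * Dp)) + (\<Sum>v\<in>{..<n} - Aset S. F (S v) * (real x * Dm))"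
  proof -
    have "(\<Sum>v<n. F (S v) * e v) = (\<Sum>v<n. if S v = \<alpha> then F \<alpha> * (real (n - x) * Dp) else F (S v) * (real x * Dm))"
      unfolding e_def by (intro sum.cong) auto
    also have "\<dots> = (\<Sum>v\<in>{v\<in>{..<n}. S v = \<alpha>}. F \<alpha> * (real (n - x) * Dp)) + (\<Sum>v\<in>{v\<in>{..<n}. S v \<noteq> \<alpha>}. F (S v) * (real x * Dm))"
      by (rule sum_if_split) simp
    also have "{v\<in>{..<n}. S v \<noteq> \<alpha>} = {..<n} - Aset S" unfolding Aset_def by auto
    finally show ?thesis unfolding Aset_def by simp
  qed
  also have "\<dots> = real x * (F \<alpha> * (real (n - x) * Dp)) + B S * (real x * Dm)"
    unfolding B_def by (simp add: sum_distrib_right x_def X_def)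
  finally show ?thesis unfolding wsum[OF vS] x_def[symmetric] Dp_def Dm_def
    by (simp add: field_simps)
qed

end



definition ph :: "nat \<Rightarrow> real \<Rightarrow> nat \<Rightarrow> real" where
  "ph n r x = (1 - r ^ x) / (1 - r ^ n)"

definition kap :: "nat \<Rightarrow> real \<Rightarrow> real" where
  "kap n r = (1 - r) / (1 - r ^ n)"

lemma den_ne: "0 < r \<Longrightarrow> r \<noteq> 1 \<Longrightarrow> 0 < n \<Longrightarrow> 1 - r ^ n \<noteq> (0::real)"
proof -
  assume r: "0 < r" "r \<noteq> 1" and n: "0 < n"
  show ?thesis
  proof (cases "r < 1")
    case True
    have "r ^ n < 1" using r True n by (simp add: power_less_one_iff)
    thus ?thesis by simp
  next
    case False
    hence "1 < r" using r by simp
    hence "1 < r ^ n" using n by simp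
    thus ?thesis by simp
  qed
qed

lemma kap_pos: "0 < r \<Longrightarrow> r \<noteq> 1 \<Longrightarrow> 0 < n \<Longrightarrow> 0 < kap n r"
proof -
  assume r: "0 < r" "r \<noteq> 1" and n: "0 < n"
  show ?thesis
  proof (cases "r < 1")
    case True
    have "r ^ n < 1" using r True n by (simp add: power_less_one_iff)
    thus ?thesis unfolding kap_def using True by simp
  next
    case False
    hence "1 < r" using r by simp
    hence "1 < r ^ n" using n by simp
    thus ?thesis unfolding kap_def using \<open>1 < r\<close> by (simp add: divide_neg_neg)
  qed
qed

lemma ph_n: "0 < r \<Longrightarrow> r \<noteq> 1 \<Longrightarrow> 0 < n \<Longrightarrow> ph n r n = 1"
  unfolding ph_def using den_ne by simp

lemma ph_0: "ph n r 0 = 0" unfolding ph_def by simp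

lemma ph_bounds: "0 < r \<Longrightarrow> r \<noteq> 1 \<Longrightarrow> x \<le> n \<Longrightarrow> 0 \<le> ph n r x \<and> ph n r x \<le> 1"
proof -
  assume r: "0 < r" "r \<noteq> 1" and x: "x \<le> n"
  show ?thesis
  proof (cases "x = 0")
    case True thus ?thesis by (simp add: ph_0)
  next
    case False
    hence n: "0 < n" "0 < x" using x by auto
    show ?thesis
    proof (cases "r < 1")
      case True
      have a: "r ^ n \<le> r ^ x" by (rule power_decreasing[OF x]) (use r True in auto)
      have b: "r ^ x < 1" using r True n by (simp add: power_less_one_iff)
      have c: "0 < 1 - r ^ n" using a b by simp
      show ?thesis unfolding ph_def using a b c by (simp add: divide_le_eq_1)
    next
      case False
      hence r1: "1 < r" using r by simp
      have a: "r ^ x \<le> r ^ n" by (rule power_increasing[OF x]) (use r1 in auto)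
      have b: "1 < r ^ x" using r1 n by simp
      have c: "1 - r ^ n < 0" using a b by simp
      have "ph n r x = (- (r ^ x - 1)) / (- (r ^ n - 1))" unfolding ph_def by simp
      also have "\<dots> = (r ^ x - 1) / (r ^ n - 1)" by (rule minus_divide_divide)
      finally have "ph n r x = (r ^ x - 1) / (r ^ n - 1)" .
      thus ?thesis using a b c by (simp add: divide_le_eq_1)
    qed
  qed
qed

lemma ph_up: "0 < r \<Longrightarrow> r \<noteq> 1 \<Longrightarrow> 0 < n \<Longrightarrow> ph n r (x+1) - ph n r x = kap n r * r ^ x"
proof -
  have "ph n r (x+1) - ph n r x = ((1 - r^(x+1)) - (1 - r^x)) / (1 - r^n)"
    unfolding ph_def by (simp add: diff_divide_distrib)
  also have "(1 - r^(x+1)) - (1 - r^x) = (1 - r) * r^x" by (simp add: algebra_simps)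
  finally show ?thesis unfolding kap_def by simp
qed

lemma ph_down: "0 < r \<Longrightarrow> r \<noteq> 1 \<Longrightarrow> 0 < n \<Longrightarrow> ph n r (Suc k - 1) - ph n r (Suc k) = - (kap n r * r ^ k)"
proof -
  have "ph n r (Suc k - 1) - ph n r (Suc k) = ((1 - r^k) - (1 - r^(Suc k))) / (1 - r^n)"
    unfolding ph_def by (simp add: diff_divide_distrib)
  also have "(1 - r^k) - (1 - r^(Suc k)) = - ((1 - r) * r^k)" by (simp add: algebra_simps)
  finally show ?thesis unfolding kap_def by simp
qed

context mor begin

lemma drift_ph:
  assumes vS: "valid S" and r: "0 < r" "r \<noteq> 1" and x: "X S = Suc k"
  shows "step (\<lambda>S'. ph n r (X S')) S = ph n r (X S) + real (X S) / (W S * real (n-1)) *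
     (kap n r * r ^ k * (F \<alpha> * real (n - X S) * r - B S))"
proof -
  have n: "0 < n" using n2 by simp
  have up: "ph n r (X S + 1) - ph n r (X S) = kap n r * r ^ Suc k" using ph_up[OF r n, of "X S"] x by simp
  have down: "ph n r (X S - 1) - ph n r (X S) = - (kap n r * r ^ k)" using ph_down[OF r n, of k] x by simp
  show ?thesis unfolding drift[OF vS] up down
    by (simp add: algebra_simps)
qed

lemma B_bounds:
  assumes vS: "valid S"
  shows "(\<forall>y\<in>T-{\<alpha>}. lo \<le> F y) \<Longrightarrow> real (n - X S) * lo \<le> B S"
    and "(\<forall>y\<in>T-{\<alpha>}. F y \<le> hi) \<Longrightarrow> B S \<le> real (n - X S) * hi"
proof -
  have mem: "\<And>u. u \<in> {..<n} - Aset S \<Longrightarrow> S u \<in> T - {\<alpha>}"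
    using vS unfolding valid_def Aset_def by auto
  show "(\<forall>y\<in>T-{\<alpha>}. lo \<le> F y) \<Longrightarrow> real (n - X S) * lo \<le> B S"
    unfolding B_def using sum_bounded_below[of "{..<n} - Aset S" lo "\<lambda>u. F (S u)"] mem card_nonA[of S]
    by auto
  show "(\<forall>y\<in>T-{\<alpha>}. F y \<le> hi) \<Longrightarrow> B S \<le> real (n - X S) * hi"
    unfolding B_def using sum_bounded_above[of "{..<n} - Aset S" "\<lambda>u. F (S u)" hi] mem card_nonA[of S]
    by auto
qed

lemma upper:
  assumes lo: "\<forall>y\<in>T-{\<alpha>}. lo \<le> F y" and r: "r = lo / F \<alpha>" "0 < r" "r \<noteq> 1"
  shows "valid S \<Longrightarrow> H t S \<le> ph n r (X S)"
proof (induction t arbitrary: S)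
  have n: "0 < n" using n2 by simp
  case 0
  show ?case
  proof (cases "all_type {..<n} S \<alpha>")
    case True thus ?thesis using all_type_iff ph_n[OF r(2,3) n] H_all by simp
  next
    case False thus ?thesis unfolding H_def using ph_bounds[OF r(2,3) X_le] by simp
  qed
next
  have n: "0 < n" using n2 by simp
  case (Suc t)
  show ?case
  proof (cases "all_type {..<n} S \<alpha>")
    case True thus ?thesis using all_type_iff ph_n[OF r(2,3) n] H_all by simp
  next
    case False
    have "H (Suc t) S \<le> step (\<lambda>S'. ph n r (X S')) S"
      unfolding H_Suc[OF False] using Suc by (intro step_mono) auto
    also have "\<dots> \<le> ph n r (X S)"
    proof (cases "X S")
      case 0 thus ?thesis using drift[OF Suc.prems, of "ph n r"] by simp
    next
      case (Suc k)
      have Fa: "F \<alpha> \<ge> 1" using Fge aT by simp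
      have Far: "F \<alpha> * r = lo" using r(1) Fa by simp
      have "F \<alpha> * real (n - X S) * r = real (n - X S) * lo" by (metis Far mult.commute mult.left_commute)
      hence "F \<alpha> * real (n - X S) * r - B S \<le> 0" using B_bounds(1)[OF Suc.prems lo] by linarith
      moreover have "0 \<le> kap n r * r ^ k" using kap_pos[OF r(2,3) n] r by simp
      ultimately have a1: "kap n r * r ^ k * (F \<alpha> * real (n - X S) * r - B S) \<le> 0"
        by (simp add: mult_nonneg_nonpos)
      have a2: "0 \<le> real (X S) / (W S * real (n-1))" using W_pos[OF Suc.prems] by simp
      show ?thesis unfolding drift_ph[OF Suc.prems r(2,3) Suc]
        using mult_nonneg_nonpos[OF a2 a1] add_le_same_cancel1 by blast
    qed
    finally show ?thesis .
  qed
qed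

end



context mor begin

lemma W_le: "valid S \<Longrightarrow> \<forall>y\<in>T-{\<alpha>}. F y \<le> hi \<Longrightarrow> W S \<le> real n * max (F \<alpha>) hi"
proof -
  assume vS: "valid S" and hi: "\<forall>y\<in>T-{\<alpha>}. F y \<le> hi"
  have "\<And>v. v \<in> {..<n} \<Longrightarrow> F (S v) \<le> max (F \<alpha>) hi"
  proof -
    fix v assume "v \<in> {..<n}"
    hence "S v \<in> T" using vS unfolding valid_def by simp
    show "F (S v) \<le> max (F \<alpha>) hi"
    proof (cases "S v = \<alpha>")
      case True thus ?thesis by simp
    next
      case False
      hence "F (S v) \<le> hi" using hi \<open>S v \<in> T\<close> by blast
      thus ?thesis by simp
    qed
  qed
  thus ?thesis unfolding W_def using sum_bounded_above[of "{..<n}" "\<lambda>v. F (S v)" "max (F \<alpha>) hi"]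
    by simp
qed

lemma lower:
  assumes hi: "\<forall>y\<in>T-{\<alpha>}. F y \<le> hi" and hip: "0 < hi" and r: "hi / F \<alpha> < r" "r \<noteq> 1"
  defines "M \<equiv> max (F \<alpha>) hi"
  defines "c \<equiv> kap n r * min 1 (r^n) * (F \<alpha> * r - hi) / (real n * M * real (n-1))"
  defines "lam \<equiv> 1 - min c 1"
  shows "valid S \<Longrightarrow> ph n r (X S) - lam ^ t * (if 0 < X S \<and> X S < n then 1 else 0) \<le> H t S"
proof -
  have n: "0 < n" using n2 by simp
  have Fa: "F \<alpha> \<ge> 1" using Fge aT by simp
  have rp: "0 < r" using hip Fa r(1) by (smt (verit) divide_pos_pos)
  have Er: "0 < F \<alpha> * r - hi" using r(1) Fa by (simp add: divide_less_eq mult.commute)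
  have Mp: "0 < M" unfolding M_def using Fa by simp
  have kp: "0 < kap n r" using kap_pos[OF rp r(2) n] .
  have mp: "0 < min 1 (r^n)" using rp by simp
  have n1: "0 < real (n-1)" using n2 by simp
  have cp: "0 < c" unfolding c_def using kp mp Er Mp n n1 by simp
  define c0 where "c0 = min c 1"
  have c0p: "0 < c0" "c0 \<le> 1" "c0 \<le> c" unfolding c0_def using cp by auto
  have lam: "0 \<le> lam" "lam \<le> 1" "lam = 1 - c0" unfolding lam_def c0_def[symmetric] using c0p by auto
  have key: "ph n r (X S) + c \<le> step (\<lambda>S'. ph n r (X S')) S"
    if vS: "valid S" and xk: "X S = Suc k" and xn: "X S < n" for S k
  proof -
    define E where "E = F \<alpha> * real (n - X S) * r - B S"
    have q1: "1 / (real n * M * real (n-1)) \<le> real (X S) / (W S * real (n-1))"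
    proof -
      have Wp: "0 < W S" using W_pos[OF vS] .
      have "W S * real (n-1) \<le> real n * M * real (n-1)"
        using W_le[OF vS hi] n1 unfolding M_def by (simp add: mult_right_mono)
      hence "1 / (real n * M * real (n-1)) \<le> 1 / (W S * real (n-1))"
        using Wp n1 by (intro divide_left_mono) auto
      also have "\<dots> \<le> real (X S) / (W S * real (n-1))"
        using xk Wp n1 by (intro divide_right_mono) auto
      finally show ?thesis .
    qed
    have q2: "min 1 (r^n) \<le> r ^ k"
    proof (cases "1 \<le> r")
      case True thus ?thesis using one_le_power[OF True, of k] by simp
    next
      case False
      have "r ^ n \<le> r ^ k" by (rule power_decreasing) (use xk xn rp False in auto)
      thus ?thesis by simp
    qed
    have q3: "F \<alpha> * r - hi \<le> E"
    proof -
      have "B S \<le> real (n - X S) * hi" using B_bounds(2)[OF vS hi] .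
      hence "real (n - X S) * (F \<alpha> * r - hi) \<le> E" unfolding E_def by (simp add: algebra_simps)
      moreover have "1 \<le> real (n - X S)" using xn by simp
      hence "1 * (F \<alpha> * r - hi) \<le> real (n - X S) * (F \<alpha> * r - hi)"
        using Er by (intro mult_right_mono) auto
      ultimately show ?thesis by simp
    qed
    have kr: "kap n r * min 1 (r^n) \<le> kap n r * r ^ k"
      using q2 kp by (intro mult_left_mono) auto
    have prod1: "kap n r * min 1 (r^n) * (F \<alpha> * r - hi) \<le> kap n r * r ^ k * E"
      by (rule mult_mono[OF kr q3]) (use kp mp Er rp in auto)
    have c1: "0 \<le> kap n r * min 1 (r^n) * (F \<alpha> * r - hi)" using kp mp Er by simp
    have c2: "0 \<le> real (X S) / (W S * real (n-1))" using W_pos[OF vS] n1 by simp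
    have "1 / (real n * M * real (n-1)) * (kap n r * min 1 (r^n) * (F \<alpha> * r - hi))
        \<le> real (X S) / (W S * real (n-1)) * (kap n r * r ^ k * E)"
      by (rule mult_mono[OF q1 prod1 c2 c1])
    moreover have "c = 1 / (real n * M * real (n-1)) * (kap n r * min 1 (r^n) * (F \<alpha> * r - hi))"
      unfolding c_def by simp
    ultimately show ?thesis unfolding drift_ph[OF vS rp r(2) xk] E_def by simp
  qed
  show "valid S \<Longrightarrow> ph n r (X S) - lam ^ t * (if 0 < X S \<and> X S < n then 1 else 0) \<le> H t S"
  proof (induction t arbitrary: S)
    case 0
    show ?case
    proof (cases "all_type {..<n} S \<alpha>")
      case True thus ?thesis using all_type_iff ph_n[OF rp r(2) n] H_all by simp
    next
      case False
      hence xn: "X S < n" using all_type_iff X_le le_neq_implies_less by blast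
      show ?thesis
      proof (cases "X S = 0")
        case True thus ?thesis unfolding H_def using False by (simp add: ph_0)
      next
        case False
        thus ?thesis unfolding H_def using xn ph_bounds[OF rp r(2) X_le] \<open>\<not> all_type {..<n} S \<alpha>\<close> by simp
      qed
    qed
  next
    case (Suc t)
    show ?case
    proof (cases "all_type {..<n} S \<alpha>")
      case True thus ?thesis using all_type_iff ph_n[OF rp r(2) n] H_all by simp
    next
      case na: False
      hence xn: "X S < n" using all_type_iff X_le le_neq_implies_less by blast
      show ?thesis
      proof (cases "X S")
        case 0 thus ?thesis using H_nonneg[OF Suc.prems] by (simp add: ph_0)
      next
        case (Suc k)
        have lt: "0 \<le> lam ^ t" "lam ^ t \<le> 1" using lam by (auto simp: power_le_one)
        have "step (\<lambda>S'. ph n r (X S') - lam ^ t) S \<le> step (H t) S"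
        proof (rule step_mono[OF Suc.prems])
          fix S' assume "valid S'"
          have "ph n r (X S') - lam ^ t \<le> ph n r (X S') - lam ^ t * (if 0 < X S' \<and> X S' < n then 1 else 0)"
            using lt by auto
          also have "\<dots> \<le> H t S'" using Suc.IH[OF \<open>valid S'\<close>] .
          finally show "ph n r (X S') - lam ^ t \<le> H t S'" .
        qed
        hence "step (\<lambda>S'. ph n r (X S')) S - lam ^ t \<le> H (Suc t) S"
          unfolding step_sub[OF Suc.prems] H_Suc[OF na] .
        moreover have "ph n r (X S) + c \<le> step (\<lambda>S'. ph n r (X S')) S"
          using key[OF Suc.prems Suc xn] .
        moreover have "lam ^ t * c0 \<le> c0" using lt c0p by (simp add: mult_left_le_one_le)
        moreover have "lam ^ Suc t = lam ^ t - lam ^ t * c0"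
        proof -
          have "lam ^ Suc t = lam ^ t * lam" by simp
          also have "\<dots> = lam ^ t * (1 - c0)" using lam(3) by simp
          finally show ?thesis by (simp add: right_diff_distrib)
        qed
        ultimately have "ph n r (X S) - lam ^ Suc t \<le> H (Suc t) S" using c0p by linarith
        thus ?thesis using Suc xn by simp
      qed
    qed
  qed
qed

lemma lower2:
  assumes hi: "\<forall>y\<in>T-{\<alpha>}. F y \<le> hi" and hip: "0 < hi" and r: "hi / F \<alpha> < r" "r \<noteq> 1"
  shows "\<exists>lam. 0 \<le> lam \<and> lam < 1 \<and> (\<forall>t S. valid S \<longrightarrow> ph n r (X S) - lam ^ t \<le> H t S)"
proof -
  define M where "M = max (F \<alpha>) hi"
  define c where "c = kap n r * min 1 (r^n) * (F \<alpha> * r - hi) / (real n * M * real (n-1))"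
  define lam where "lam = 1 - min c 1"
  have n: "0 < n" using n2 by simp
  have Fa: "F \<alpha> \<ge> 1" using Fge aT by simp
  have rp: "0 < r" using hip Fa r(1) by (smt (verit) divide_pos_pos)
  have Er: "0 < F \<alpha> * r - hi" using r(1) Fa by (simp add: divide_less_eq mult.commute)
  have Mp: "0 < M" unfolding M_def using Fa by simp
  have kp: "0 < kap n r" using kap_pos[OF rp r(2) n] .
  have mp: "0 < min 1 (r^n)" using rp by simp
  have n1: "0 < real (n-1)" using n2 by simp
  have cp: "0 < c" unfolding c_def using kp mp Er Mp n n1 by simp
  have l: "0 \<le> lam" "lam < 1" unfolding lam_def using cp by auto
  have "\<forall>t S. valid S \<longrightarrow> ph n r (X S) - lam ^ t \<le> H t S"
  proof (intro allI impI)
    fix t S assume vS: "valid S"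
    have "ph n r (X S) - lam ^ t * (if 0 < X S \<and> X S < n then 1 else 0) \<le> H t S"
      using lower[OF hi hip r vS, of t] unfolding lam_def c_def M_def .
    moreover have "lam ^ t * (if 0 < X S \<and> X S < n then 1 else 0) \<le> lam ^ t" using l by simp
    ultimately show "ph n r (X S) - lam ^ t \<le> H t S" by linarith
  qed
  thus ?thesis using l by blast
qed

end



lemma n1_case:
  fixes F :: "'t \<Rightarrow> real"
  assumes "F (S 0) > 0"
  shows "hit_within {..<1} (complete_nbhd 1) F \<alpha> t S = (if S 0 = \<alpha> then 1 else 0)"
proof (induction t)
  case 0 thus ?case by (simp add: all_type_def)
next
  case (Suc t)
  have e: "complete_nbhd (Suc 0) 0 = {}" unfolding complete_nbhd_def by auto
  show ?case using Suc assms by (simp add: all_type_def e)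
qed

theorem lemma22:
  fixes n :: nat and T :: "'t set" and f :: "'t \<Rightarrow> rat"
    and \<alpha> \<beta>p \<beta>m :: 't and M0 :: "nat \<Rightarrow> 't" and i :: nat
  assumes "n > 0"
    and "\<forall>\<beta>\<in>T. f \<beta> \<ge> 1"
    and "\<alpha> \<in> T"
    and "\<beta>p \<in> T - {\<alpha>}" and "\<forall>\<beta>\<in>T - {\<alpha>}. f \<beta> \<le> f \<beta>p"
    and "\<beta>m \<in> T - {\<alpha>}" and "\<forall>\<beta>\<in>T - {\<alpha>}. f \<beta>m \<le> f \<beta>"
    and "f \<alpha> \<noteq> f \<beta>p" and "f \<alpha> \<noteq> f \<beta>m"
    and "\<forall>v<n. M0 v \<in> T"
    and "i = card {v\<in>{..<n}. M0 v = \<alpha>}"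
  shows "(1 - (real_of_rat (f \<beta>p / f \<alpha>)) ^ i) / (1 - (real_of_rat (f \<beta>p / f \<alpha>)) ^ n)
           \<le> fixation_prob {..<n} (complete_nbhd n) (\<lambda>x. real_of_rat (f x)) M0 \<alpha>
       \<and> fixation_prob {..<n} (complete_nbhd n) (\<lambda>x. real_of_rat (f x)) M0 \<alpha>
           \<le> (1 - (real_of_rat (f \<beta>m / f \<alpha>)) ^ i) / (1 - (real_of_rat (f \<beta>m / f \<alpha>)) ^ n)"
proof -
  define F where "F = (\<lambda>x. real_of_rat (f x))"
  have Fge: "\<forall>x\<in>T. 1 \<le> F x"
  proof
    fix x assume "x \<in> T"
    hence "1 \<le> f x" using assms(2) by blast
    thus "1 \<le> F x" unfolding F_def using of_rat_less_eq[of 1 "f x"] by simp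
  qed
  have fr: "\<And>\<beta>. real_of_rat (f \<beta> / f \<alpha>) = F \<beta> / F \<alpha>" unfolding F_def by (simp add: of_rat_divide)
  define P where "P = fixation_prob {..<n} (complete_nbhd n) F M0 \<alpha>"
  have P_eq: "P = (SUP t. hit_within {..<n} (complete_nbhd n) F \<alpha> t M0)"
    unfolding P_def fixation_prob_def ..
  have Fa: "1 \<le> F \<alpha>" using Fge assms(3) by simp
  have Fp: "1 \<le> F \<beta>p" using Fge assms(4) by simp
  have Fm: "1 \<le> F \<beta>m" using Fge assms(6) by simp
  have np: "F \<beta>p \<noteq> F \<alpha>" unfolding F_def using assms(8) by simp
  have nm: "F \<beta>m \<noteq> F \<alpha>" unfolding F_def using assms(9) by simp
  define rp where "rp = F \<beta>p / F \<alpha>"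
  define rm where "rm = F \<beta>m / F \<alpha>"
  have rpp: "0 < rp" "rp \<noteq> 1" unfolding rp_def using Fa Fp np by auto
  have rmp: "0 < rm" "rm \<noteq> 1" unfolding rm_def using Fa Fm nm by auto
  have goal: "ph n rp i \<le> P \<and> P \<le> ph n rm i"
  proof (cases "n = 1")
    case True
    have F0: "F (M0 0) > 0" using Fge assms(10) True by fastforce
    have h: "\<And>t. hit_within {..<1} (complete_nbhd 1) F \<alpha> t M0 = (if M0 0 = \<alpha> then 1 else 0)"
      by (rule n1_case[of F M0, OF F0])
    have "P = (SUP t::nat. (if M0 0 = \<alpha> then 1 else 0))" unfolding P_eq True h ..
    hence P1: "P = (if M0 0 = \<alpha> then 1 else 0)" by simp
    have "{v\<in>{..<n}. M0 v = \<alpha>} = (if M0 0 = \<alpha> then {0} else {})" using True by auto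
    hence i1: "i = (if M0 0 = \<alpha> then 1 else 0)" using assms(11) by simp
    show ?thesis unfolding P1 i1 ph_def True using rpp rmp by auto
  next
    case False
    hence n2: "2 \<le> n" using assms(1) by simp
    interpret mor n T F \<alpha> using n2 Fge assms(3) by unfold_locales auto
    have vM: "valid M0" unfolding valid_def using assms(10) by simp
    have xi: "X M0 = i" unfolding X_def Aset_def assms(11) ..
    have Hdef: "\<And>t. hit_within {..<n} (complete_nbhd n) F \<alpha> t M0 = H t M0" unfolding H_def ..
    have lo: "\<forall>y\<in>T-{\<alpha>}. F \<beta>m \<le> F y" unfolding F_def using assms(7) of_rat_less_eq by blast
    have hi: "\<forall>y\<in>T-{\<alpha>}. F y \<le> F \<beta>p" unfolding F_def using assms(5) of_rat_less_eq by blast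
    have up: "\<And>t. H t M0 \<le> ph n rm i" using upper[OF lo rm_def rmp vM] xi by simp
    have bdd: "bdd_above (range (\<lambda>t. H t M0))" using up by (intro bdd_aboveI2) 
    have Pup: "P \<le> ph n rm i" unfolding P_eq Hdef by (rule cSUP_least) (auto intro: up)
    have Pge: "H t M0 \<le> P" for t unfolding P_eq Hdef by (rule cSUP_upper[OF _ bdd]) simp
    have low: "ph n r i \<le> P" if r: "rp < r" "r \<noteq> 1" for r
    proof -
      obtain lam where l: "0 \<le> lam" "lam < 1" "\<forall>t S. valid S \<longrightarrow> ph n r (X S) - lam ^ t \<le> H t S"
      proof -
        have hp: "0 < F \<beta>p" using Fp by simp
        have rr: "F \<beta>p / F \<alpha> < r" using r(1) unfolding rp_def .
        show ?thesis using lower2[OF hi hp rr r(2)] that by blast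
      qed
      have lim: "(\<lambda>t. ph n r i - lam ^ t) \<longlonglongrightarrow> ph n r i - 0"
        using l by (intro tendsto_intros) auto
      show ?thesis
      proof (rule LIMSEQ_le_const2[OF lim[simplified]])
        show "\<exists>N. \<forall>t\<ge>N. ph n r i - lam ^ t \<le> P"
        proof (intro exI allI impI)
          fix t :: nat
          have "ph n r i - lam ^ t \<le> H t M0" using l(3) vM xi by auto
          thus "ph n r i - lam ^ t \<le> P" using Pge[of t] by linarith
        qed
      qed
    qed
    have lim: "((\<lambda>r. ph n r i) \<longlongrightarrow> ph n rp i) (at_right rp)"
      unfolding ph_def using den_ne[OF rpp, of n] assms(1)
      by (intro tendsto_intros) auto
    have ev: "eventually (\<lambda>r. ph n r i \<le> P) (at_right rp)"
    proof -
      define b where "b = (if rp < 1 then 1 else rp + 1)"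
      have "rp < b" unfolding b_def by simp
      moreover have "\<forall>y>rp. y < b \<longrightarrow> ph n y i \<le> P"
      proof (intro allI impI)
        fix y assume y: "rp < y" "y < b"
        have "y \<noteq> 1" using y rpp unfolding b_def by (auto split: if_splits)
        thus "ph n y i \<le> P" using low y by simp
      qed
      ultimately show ?thesis by (subst eventually_at_right[of rp b]) auto
    qed
    have "ph n rp i \<le> P" by (rule tendsto_upperbound[OF lim ev]) simp
    thus ?thesis using Pup by simp
  qed
  show ?thesis using goal unfolding ph_def fr P_def F_def rp_def rm_def .
qed


end
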